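(* Let $N, S \ge 1$, let $\overline{C}_1,\dots,\overline{C}_S \in \mathbb{R}^{N\times N}$ be symmetric matrices, and let $h \in \Sigma_N$. Define $D_h = \mathrm{diag}(h)$ and the matrix $M \in \mathbb{R}^{S\times S}$ by $M_{pq} = \langle D_h \overline{C}_p, \overline{C}_q D_h\rangle_F$. Then $M$ is positive semi-definite, so $\|x\|_M := \sqrt{x^\top M x}$ defines a (pseudo-)norm on $\mathbb{R}^S$ and $d_M(x,y)=\|x-y\|_M$ a Mahalanobis (pseudo-)distance. Moreover, for any $w^{(1)}, w^{(2)} \in \Sigma_S$, $$GW_2\Big(\sum_{s=1}^S w^{(1)}_s \overline{C}_s,\ \sum_{s=1}^S w^{(2)}_s \overline{C}_s,\ h,\ h\Big) \le \|w^{(1)} - w^{(2)}\|_M .$$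
   Context: $\Sigma_N = \{h \in \mathbb{R}_+^N : \sum_i h_i = 1\}$. For $h^X\in\Sigma_{N^X}$, $h^Y\in\Sigma_{N^Y}$, $\mathcal{U}(h^X,h^Y) = \{T \in \mathbb{R}_+^{N^X\times N^Y} : T\mathbf{1}_{N^Y} = h^X,\ T^\top \mathbf{1}_{N^X} = h^Y\}$. For matrices $C^X \in \mathbb{R}^{N^X\times N^X}$, $C^Y\in\mathbb{R}^{N^Y\times N^Y}$, the Gromov–Wasserstein distance is $GW_2(C^X,C^Y,h^X,h^Y) = \big(\min_{T\in\mathcal{U}(h^X,h^Y)} \sum_{i,j,k,l} (C^X_{ij} - C^Y_{kl})^2 T_{ik}T_{jl}\big)^{1/2}$. $\langle A,B\rangle_F = \mathrm{tr}(A^\top B)$. *)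

theory Defs
  imports "HOL-Analysis.Analysis"
begin

definition prob_simplex :: "(real^'n) set" where
  "prob_simplex = {h. (\<forall>i. 0 \<le> h $ i) \<and> (\<Sum>i\<in>UNIV. h $ i) = 1}"

definition couplings :: "real^'n \<Rightarrow> real^'m \<Rightarrow> (real^'m^'n) set" where
  "couplings hX hY = {T. (\<forall>i k. 0 \<le> T $ i $ k)
      \<and> (\<forall>i. (\<Sum>k\<in>UNIV. T $ i $ k) = hX $ i)
      \<and> (\<forall>k. (\<Sum>i\<in>UNIV. T $ i $ k) = hY $ k)}"

definition gw_cost :: "real^'n^'n \<Rightarrow> real^'m^'m \<Rightarrow> real^'m^'n \<Rightarrow> real" where
  "gw_cost CX CY T = (\<Sum>i\<in>UNIV. \<Sum>j\<in>UNIV. \<Sum>k\<in>UNIV. \<Sum>l\<in>UNIV.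
      (CX $ i $ j - CY $ k $ l)\<^sup>2 * T $ i $ k * T $ j $ l)"

text \<open>GW_2 distance (the minimum is attained; we write it as an infimum).\<close>
definition GW2 :: "real^'n^'n \<Rightarrow> real^'m^'m \<Rightarrow> real^'n \<Rightarrow> real^'m \<Rightarrow> real" where
  "GW2 CX CY hX hY = sqrt (Inf (gw_cost CX CY ` couplings hX hY))"

definition frob_inner :: "real^'n^'m \<Rightarrow> real^'n^'m \<Rightarrow> real" where
  "frob_inner A B = trace (transpose A ** B)"

definition diag_mat :: "real^'n \<Rightarrow> real^'n^'n" where
  "diag_mat h = (\<chi> i j. if i = j then h $ i else 0)"

definition symmetric_mat :: "real^'n^'n \<Rightarrow> bool" where
  "symmetric_mat A \<longleftrightarrow> transpose A = A"

definition psd :: "real^'n^'n \<Rightarrow> bool" where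
  "psd A \<longleftrightarrow> symmetric_mat A \<and> (\<forall>x. 0 \<le> x \<bullet> (A *v x))"

definition M_mat :: "real^'n \<Rightarrow> ('s \<Rightarrow> real^'n^'n) \<Rightarrow> real^'s^'s" where
  "M_mat h C = (\<chi> p q. frob_inner (diag_mat h ** C p) (C q ** diag_mat h))"

definition mnorm :: "real^'s^'s \<Rightarrow> real^'s \<Rightarrow> real" where
  "mnorm M x = sqrt (x \<bullet> (M *v x))"

definition mdist :: "real^'s^'s \<Rightarrow> real^'s \<Rightarrow> real^'s \<Rightarrow> real" where
  "mdist M x y = mnorm M (x - y)"

end

theory Submission
  imports Defs
begin

lemma if0_mult[simp]: "(if P then (a::real) else 0) * b = (if P then a * b else 0)"
  "b * (if P then (a::real) else 0) = (if P then b * a else 0)"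
  by auto

lemma M_entry:
  "M_mat h C $ p $ q = (\<Sum>i\<in>UNIV. \<Sum>j\<in>UNIV. h$i * h$j * (C p $i$j * C q $i$j))"
proof -
  have a: "(diag_mat h ** C p) $ k $ i = h$k * C p $k$i" for k i
    by (simp add: diag_mat_def matrix_matrix_mult_def cong: if_cong)
  have b: "(C q ** diag_mat h) $ k $ i = C q $k$i * h$i" for k i
    by (simp add: diag_mat_def matrix_matrix_mult_def cong: if_cong)
  have "M_mat h C $ p $ q = (\<Sum>i\<in>UNIV. \<Sum>k\<in>UNIV. (diag_mat h ** C p) $ k $ i * (C q ** diag_mat h) $ k $ i)"
    by (simp add: M_mat_def frob_inner_def trace_def matrix_matrix_mult_def transpose_def)
  also have "\<dots> = (\<Sum>i\<in>UNIV. \<Sum>k\<in>UNIV. h$k * h$i * (C p $k$i * C q $k$i))"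
    by (simp add: a b algebra_simps)
  also have "\<dots> = (\<Sum>k\<in>UNIV. \<Sum>i\<in>UNIV. h$k * h$i * (C p $k$i * C q $k$i))"
    by (rule sum.swap)
  finally show ?thesis .
qed

lemma quad:
  "x \<bullet> (M_mat h C *v x) = (\<Sum>i\<in>UNIV. \<Sum>j\<in>UNIV. h$i * h$j * (\<Sum>p\<in>UNIV. x$p * C p $i$j)\<^sup>2)"
proof -
  have "x \<bullet> (M_mat h C *v x) = (\<Sum>p\<in>UNIV. \<Sum>q\<in>UNIV. \<Sum>i\<in>UNIV. \<Sum>j\<in>UNIV.
          h$i * h$j * ((x$p * C p $i$j) * (x$q * C q $i$j)))"
    by (simp add: inner_vec_def matrix_vector_mult_def M_entry sum_distrib_left sum_distrib_right
        algebra_simps)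
  also have "\<dots> = (\<Sum>p\<in>UNIV. \<Sum>i\<in>UNIV. \<Sum>q\<in>UNIV. \<Sum>j\<in>UNIV.
          h$i * h$j * ((x$p * C p $i$j) * (x$q * C q $i$j)))"
    by (rule sum.cong[OF refl], rule sum.swap)
  also have "\<dots> = (\<Sum>p\<in>UNIV. \<Sum>i\<in>UNIV. \<Sum>j\<in>UNIV. \<Sum>q\<in>UNIV.
          h$i * h$j * ((x$p * C p $i$j) * (x$q * C q $i$j)))"
    by (rule sum.cong[OF refl], rule sum.cong[OF refl], rule sum.swap)
  also have "\<dots> = (\<Sum>i\<in>UNIV. \<Sum>p\<in>UNIV. \<Sum>j\<in>UNIV. \<Sum>q\<in>UNIV.
          h$i * h$j * ((x$p * C p $i$j) * (x$q * C q $i$j)))"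
    by (rule sum.swap)
  also have "\<dots> = (\<Sum>i\<in>UNIV. \<Sum>j\<in>UNIV. \<Sum>p\<in>UNIV. \<Sum>q\<in>UNIV.
          h$i * h$j * ((x$p * C p $i$j) * (x$q * C q $i$j)))"
    by (rule sum.cong[OF refl], rule sum.swap)
  also have "\<dots> = (\<Sum>i\<in>UNIV. \<Sum>j\<in>UNIV. h$i * h$j * (\<Sum>p\<in>UNIV. x$p * C p $i$j)\<^sup>2)"
  proof (rule sum.cong[OF refl], rule sum.cong[OF refl])
    fix i j
    have "(\<Sum>p\<in>UNIV. x$p * C p $i$j)\<^sup>2 = (\<Sum>p\<in>UNIV. \<Sum>q\<in>UNIV. (x$p * C p $i$j) * (x$q * C q $i$j))"
      by (simp only: power2_eq_square sum_product)
    then show "(\<Sum>p\<in>UNIV. \<Sum>q\<in>UNIV. h$i * h$j * ((x$p * C p $i$j) * (x$q * C q $i$j))) =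
       h$i * h$j * (\<Sum>p\<in>UNIV. x$p * C p $i$j)\<^sup>2"
      by (simp add: sum_distrib_left)
  qed
  finally show ?thesis .
qed

definition Lmap :: "real^'n \<Rightarrow> ('s::finite \<Rightarrow> real^'n::finite^'n) \<Rightarrow> real^'s \<Rightarrow> real^'n^'n" where
  "Lmap h C x = (\<chi> i j. sqrt (h$i * h$j) * (\<Sum>p\<in>UNIV. x$p * C p $i$j))"

lemma Lmap_add: "Lmap h C (x + y) = Lmap h C x + Lmap h C y"
  by (simp add: Lmap_def vec_eq_iff sum.distrib algebra_simps)

lemma Lmap_scale: "Lmap h C (c *\<^sub>R x) = c *\<^sub>R Lmap h C x"
  by (simp add: Lmap_def vec_eq_iff sum_distrib_left algebra_simps)

lemma Lmap_diff: "Lmap h C (x - y) = Lmap h C x - Lmap h C y"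
  by (simp add: Lmap_def vec_eq_iff sum_subtractf algebra_simps)

lemma mnorm_L:
  assumes h: "h \<in> prob_simplex"
  shows "mnorm (M_mat h C) x = norm (Lmap h C x)"
proof -
  have hn: "0 \<le> h$i" for i using h by (simp add: prob_simplex_def)
  have "Lmap h C x \<bullet> Lmap h C x = x \<bullet> (M_mat h C *v x)"
    unfolding quad
    by (simp add: Lmap_def inner_vec_def power_mult_distrib hn power2_eq_square[symmetric])
  then show ?thesis by (simp add: mnorm_def norm_eq_sqrt_inner)
qed

theorem proposition1:
  fixes C :: "'s::finite \<Rightarrow> real^'n::finite^'n"
    and h :: "real^'n"
  assumes sym: "\<And>s. symmetric_mat (C s)"
    and h: "h \<in> prob_simplex"
  shows "psd (M_mat h C)
    \<and> (\<forall>x y. mnorm (M_mat h C) (x + y) \<le> mnorm (M_mat h C) x + mnorm (M_mat h C) y)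
    \<and> (\<forall>c x. mnorm (M_mat h C) (c *\<^sub>R x) = \<bar>c\<bar> * mnorm (M_mat h C) x)
    \<and> (\<forall>x y z. mdist (M_mat h C) x z \<le> mdist (M_mat h C) x y + mdist (M_mat h C) y z)
    \<and> (\<forall>x y. mdist (M_mat h C) x y = mdist (M_mat h C) y x)
    \<and> (\<forall>w1 \<in> prob_simplex. \<forall>w2 \<in> prob_simplex.
         GW2 (\<Sum>s\<in>UNIV. w1 $ s *\<^sub>R C s) (\<Sum>s\<in>UNIV. w2 $ s *\<^sub>R C s) h h
           \<le> mnorm (M_mat h C) (w1 - w2))"
proof (intro conjI allI ballI)
  have hn: "0 \<le> h$i" for i using h by (simp add: prob_simplex_def)
  have hs: "(\<Sum>i\<in>UNIV. h$i) = 1" using h by (simp add: prob_simplex_def)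
  note mL = mnorm_L[OF h, of C]
  show "psd (M_mat h C)"
    unfolding psd_def symmetric_mat_def
  proof
    show "transpose (M_mat h C) = M_mat h C"
      by (simp add: vec_eq_iff transpose_def M_entry mult.commute)
    show "\<forall>x. 0 \<le> x \<bullet> (M_mat h C *v x)"
      by (simp add: quad hn sum_nonneg)
  qed
  show "mnorm (M_mat h C) (x + y) \<le> mnorm (M_mat h C) x + mnorm (M_mat h C) y" for x y
    by (simp add: mL Lmap_add norm_triangle_ineq)
  show "mnorm (M_mat h C) (c *\<^sub>R x) = \<bar>c\<bar> * mnorm (M_mat h C) x" for c x
    by (simp add: mL Lmap_scale)
  show "mdist (M_mat h C) x z \<le> mdist (M_mat h C) x y + mdist (M_mat h C) y z" for x y z
  proof -
    have "x - z = (x - y) + (y - z)" by simp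
    then show ?thesis unfolding mdist_def
      by (metis mL Lmap_add norm_triangle_ineq)
  qed
  show "mdist (M_mat h C) x y = mdist (M_mat h C) y x" for x y
    by (simp add: mdist_def mL Lmap_diff norm_minus_commute)
  fix w1 w2 :: "real^'s"
  let ?X = "\<Sum>s\<in>UNIV. w1 $ s *\<^sub>R C s" and ?Y = "\<Sum>s\<in>UNIV. w2 $ s *\<^sub>R C s"
  let ?T = "diag_mat h :: real^'n^'n"
  have cT: "?T \<in> couplings h h"
    by (simp add: couplings_def diag_mat_def hn cong: if_cong)
  have dif: "?X $ i $ j - ?Y $ i $ j = (\<Sum>p\<in>UNIV. (w1 - w2)$p * C p $i$j)" for i j
    by (simp add: sum_component algebra_simps sum_subtractf)
  have "gw_cost ?X ?Y ?T = (\<Sum>i\<in>UNIV. \<Sum>j\<in>UNIV. (?X $ i $ j - ?Y $ i $ j)\<^sup>2 * h$i * h$j)"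
    unfolding gw_cost_def diag_mat_def
    by (simp add: cong: if_cong)
  also have "\<dots> = (w1 - w2) \<bullet> (M_mat h C *v (w1 - w2))"
    unfolding quad dif by (simp add: algebra_simps)
  finally have cost: "gw_cost ?X ?Y ?T = (w1 - w2) \<bullet> (M_mat h C *v (w1 - w2))" .
  have bdd: "bdd_below (gw_cost ?X ?Y ` couplings h h)"
    by (rule bdd_belowI[of _ 0]) (auto simp: gw_cost_def couplings_def intro!: sum_nonneg)
  have "Inf (gw_cost ?X ?Y ` couplings h h) \<le> gw_cost ?X ?Y ?T"
    by (rule cInf_lower[OF imageI[OF cT] bdd])
  then show "GW2 ?X ?Y h h \<le> mnorm (M_mat h C) (w1 - w2)"
    unfolding GW2_def mnorm_def cost by simp
qed

end
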